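(* Let $\mathfrak g$ be the real linear span of the five matrices of any one of the following three families (for any real values of the parameters). Then every integral variety of type $(1/2,0)$ related to $\mathfrak g$ is affinely equivalent to (an open piece of) the quadric $v = 2x_1^2+|z_2|^2$. Family A (parameters $m_1,m_2,t_{16}\in\mathbb{R}$, $m_2\ne0$): $E_1=\begin{pmatrix} m_1&0&0&1\\0&m_1+\frac{i m_1 t_{16}}{m_2}&0&0\\4i&0&2m_1&0\\0&0&0&0\end{pmatrix}$, $E_2=\begin{pmatrix} m_2&0&0&i\\0&m_2+it_{16}&0&0\\0&0&2m_2&0\\0&0&0&0\end{pmatrix}$, $E_3=\begin{pmatrix}0&0&0&0\\0&0&0&1\\0&2i&0&0\\0&0&0&0\end{pmatrix}$, $E_4=\begin{pmatrix}0&0&0&0\\0&0&0&i\\0&2&0&0\\0&0&0&0\end{pmatrix}$, $E_5=\begin{pmatrix}0&0&0&0\\0&0&0&0\\0&0&0&1\\0&0&0&0\end{pmatrix}$. Family B (parameters $m_1,m_3,m_4\in\mathbb{R}$): $E_1=\begin{pmatrix} -2m_1&0&im_1^2&1\\0&0&0&0\\4i&0&2m_1&0\\0&0&0&0\end{pmatrix}$, $E_2=\begin{pmatrix}0&0&0&i\\0&0&0&0\\0&0&0&0\\0&0&0&0\end{pmatrix}$, $E_3=\begin{pmatrix} m_3&-m_1&\frac{i}{2}m_1m_3&0\\0&m_3-im_4&0&1\\0&2i&2m_3&0\\0&0&0&0\end{pmatrix}$, $E_4=\begin{pmatrix} m_4&im_1&\frac{i}{2}m_1m_4&0\\0&m_4+im_3&0&i\\0&2&2m_4&0\\0&0&0&0\end{pmatrix}$,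 $E_5=\begin{pmatrix}0&0&0&0\\0&0&0&0\\0&0&0&1\\0&0&0&0\end{pmatrix}$. Family C (parameters $m_1,m_2,m_3,m_4,t_7\in\mathbb{R}$): $E_1=\begin{pmatrix} 3t_7-2m_1&0&\frac{i}{2}(2m_1-t_7)(m_1-t_7)&1\\0&t_7&0&0\\4i&0&2m_1&0\\0&0&0&0\end{pmatrix}$, $E_2=\begin{pmatrix} m_2&0&\frac{i}{2}m_2(m_1-t_7)&i\\0&m_2&0&0\\0&0&2m_2&0\\0&0&0&0\end{pmatrix}$, $E_3=\begin{pmatrix} m_3&t_7-m_1&\frac{i}{2}m_3(m_1-t_7)&0\\0&m_3&0&1\\0&2i&2m_3&0\\0&0&0&0\end{pmatrix}$, $E_4=\begin{pmatrix} m_4&i(m_1-t_7)&\frac{i}{2}m_4(m_1-t_7)&0\\0&m_4&0&i\\0&2&2m_4&0\\0&0&0&0\end{pmatrix}$, $E_5=\begin{pmatrix} -\frac12 m_2(m_1-t_7)&0&-\frac{i}{4}m_2(m_1-t_7)^2&0\\0&-\frac12 m_2(m_1-t_7)&0&0\\0&0&-m_2(m_1-t_7)&1\\0&0&0&0\end{pmatrix}$.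
   Context: Coordinates in $\mathbb{C}^3$ are $z_1=x_1+iy_1$, $z_2=x_2+iy_2$, $w=u+iv$, $z=(z_1,z_2)$. To a complex $4\times4$ matrix $\begin{pmatrix}a_1&a_2&a_3&p\\ b_1&b_2&b_3&s\\ c_1&c_2&c_3&q\\0&0&0&0\end{pmatrix}$ one associates the holomorphic affine vector field $Z=(a_1z_1+a_2z_2+a_3w+p)\frac{\partial}{\partial z_1}+(b_1z_1+b_2z_2+b_3w+s)\frac{\partial}{\partial z_2}+(c_1z_1+c_2z_2+c_3w+q)\frac{\partial}{\partial w}$. For a real linear span $\mathfrak g$ of such matrices, an integral variety of type $(1/2,0)$ related to $\mathfrak g$ is a real-analytic strictly pseudoconvex real hypersurface $M$ defined near $0\in\mathbb{C}^3$, with $0\in M$, given near $0$ by an equation $v=|z_1|^2+|z_2|^2+\frac12(z_1^2+\bar z_1^2)+\sum_{k+l+2m\ge 3}F_{klm}(z,\bar z)u^m$ (with $F_{klm}$ a polynomial of degree $k$ in $z$ and $l$ in $\bar z$, the right-hand side real), such that for every $Z\in\mathfrak g$ the real vector field $Z+\bar Z$ is tangent to $M$, i.e. $\mathrm{Re}(Z(\Phi))|_M=0$ for a defining function $\Phi$ of $M$. Two hypersurfaces are affinely equivalent if a complex affine transformation of $\mathbb{C}^3$ maps a neighbourhood in one onto an open piece of the other. *)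

theory Defs
  imports "HOL-Analysis.Analysis"
begin

text \<open>Points of C^3 are triples (z1, z2, w); C^3 is viewed as a real normed vector space.\<close>
type_synonym cpt = "complex \<times> complex \<times> complex"

text \<open>Complex 4x4 matrices, indexed by 0..3 (row, column).\<close>
type_synonym cmat = "nat \<Rightarrow> nat \<Rightarrow> complex"

definition mat_rows :: "complex list list \<Rightarrow> cmat" where
  "mat_rows rs = (\<lambda>i j. rs ! i ! j)"

text \<open>Holomorphic affine vector field associated with a matrix: its coefficient vector
  (Z(z1), Z(z2), Z(w)) at a point.\<close>
definition vfield :: "cmat \<Rightarrow> cpt \<Rightarrow> cpt" where
  "vfield E p = (case p of (z1, z2, w) \<Rightarrow>
     (E 0 0 * z1 + E 0 1 * z2 + E 0 2 * w + E 0 3,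
      E 1 0 * z1 + E 1 1 * z2 + E 1 2 * w + E 1 3,
      E 2 0 * z1 + E 2 1 * z2 + E 2 2 * w + E 2 3))"

definition real_span :: "cmat list \<Rightarrow> cmat set" where
  "real_span Es = {(\<lambda>i j. \<Sum>k<length Es. complex_of_real (c k) * (Es ! k) i j) | c. True}"

type_synonym midx = "nat \<times> nat \<times> nat \<times> nat \<times> nat"

definition monom :: "midx \<Rightarrow> complex \<Rightarrow> complex \<Rightarrow> real \<Rightarrow> complex" where
  "monom \<alpha> z1 z2 u = (case \<alpha> of (k1, k2, l1, l2, m) \<Rightarrow>
     z1 ^ k1 * z2 ^ k2 * cnj z1 ^ l1 * cnj z2 ^ l2 * complex_of_real u ^ m)"

definition weight :: "midx \<Rightarrow> nat" where
  "weight \<alpha> = (case \<alpha> of (k1, k2, l1, l2, m) \<Rightarrow> k1 + k2 + l1 + l2 + 2 * m)"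

text \<open>The higher-order part  sum_{k+l+2m>=3} F_klm(z, zbar) u^m  as a power series.\<close>
definition hseries :: "(midx \<Rightarrow> complex) \<Rightarrow> complex \<Rightarrow> complex \<Rightarrow> real \<Rightarrow> complex" where
  "hseries a z1 z2 u = (\<Sum>\<^sub>\<infinity>\<alpha>. a \<alpha> * monom \<alpha> z1 z2 u)"

definition defphi :: "(midx \<Rightarrow> complex) \<Rightarrow> cpt \<Rightarrow> real" where
  "defphi a p = (case p of (z1, z2, w) \<Rightarrow>
     Im w - Re (complex_of_real ((cmod z1)\<^sup>2 + (cmod z2)\<^sup>2) + (z1\<^sup>2 + (cnj z1)\<^sup>2) / 2
                + hseries a z1 z2 (Re w)))"

text \<open>M is represented by its piece in an
  open neighbourhood U of 0 on which the defining series converges (absolutely) and is real.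
  Tangency of Z + conj Z to M at p is expressed as dPhi_p(Z(p)) = 0, which equals
  2 Re(Z(Phi))(p) for real Phi.  Strict pseudoconvexity is automatic from the normal form.\<close>
definition integral_variety :: "cmat set \<Rightarrow> cpt set \<Rightarrow> bool" where
  "integral_variety g M \<longleftrightarrow>
     (\<exists>(U :: cpt set) (a :: midx \<Rightarrow> complex). open U \<and> 0 \<in> U \<and>
        (\<forall>\<alpha>. a \<alpha> \<noteq> 0 \<longrightarrow> weight \<alpha> \<ge> 3) \<and>
        (\<forall>p \<in> U. case p of (z1, z2, w) \<Rightarrow>
           ((\<lambda>\<alpha>. norm (a \<alpha> * monom \<alpha> z1 z2 (Re w))) summable_on UNIV)
           \<and> Im (hseries a z1 z2 (Re w)) = 0) \<and>
        M = {p \<in> U. defphi a p = 0} \<and>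
        (\<forall>E \<in> g. \<forall>p \<in> M. \<exists>D. (defphi a has_derivative D) (at p) \<and> D (vfield E p) = 0))"

definition affmap :: "cmat \<Rightarrow> cpt \<Rightarrow> cpt \<Rightarrow> cpt" where
  "affmap L b p = (case p of (z1, z2, w) \<Rightarrow> case b of (b1, b2, b3) \<Rightarrow>
     (L 0 0 * z1 + L 0 1 * z2 + L 0 2 * w + b1,
      L 1 0 * z1 + L 1 1 * z2 + L 1 2 * w + b2,
      L 2 0 * z1 + L 2 1 * z2 + L 2 2 * w + b3))"

definition affinely_equivalent :: "cpt set \<Rightarrow> cpt set \<Rightarrow> bool" where
  "affinely_equivalent M N \<longleftrightarrow>
     (\<exists>L b W W'. bij (affmap L b) \<and> open W \<and> 0 \<in> W \<and> open W' \<and>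
        affmap L b ` (M \<inter> W) = N \<inter> W')"

definition quadric :: "cpt set" where
  "quadric = {(z1, z2, w). Im w = 2 * (Re z1)\<^sup>2 + (cmod z2)\<^sup>2}"

abbreviation (input) cr :: "real \<Rightarrow> complex" where "cr x \<equiv> complex_of_real x"

definition familyA :: "real \<Rightarrow> real \<Rightarrow> real \<Rightarrow> cmat list" where
  "familyA m1 m2 t16 =
    [mat_rows [[cr m1, 0, 0, 1], [0, cr m1 + \<i> * cr m1 * cr t16 / cr m2, 0, 0], [4 * \<i>, 0, 2 * cr m1, 0], [0, 0, 0, 0]],
     mat_rows [[cr m2, 0, 0, \<i>], [0, cr m2 + \<i> * cr t16, 0, 0], [0, 0, 2 * cr m2, 0], [0, 0, 0, 0]],
     mat_rows [[0, 0, 0, 0], [0, 0, 0, 1], [0, 2 * \<i>, 0, 0], [0, 0, 0, 0]],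
     mat_rows [[0, 0, 0, 0], [0, 0, 0, \<i>], [0, 2, 0, 0], [0, 0, 0, 0]],
     mat_rows [[0, 0, 0, 0], [0, 0, 0, 0], [0, 0, 0, 1], [0, 0, 0, 0]]]"

definition familyB :: "real \<Rightarrow> real \<Rightarrow> real \<Rightarrow> cmat list" where
  "familyB m1 m3 m4 =
    [mat_rows [[-2 * cr m1, 0, \<i> * cr m1 ^ 2, 1], [0, 0, 0, 0], [4 * \<i>, 0, 2 * cr m1, 0], [0, 0, 0, 0]],
     mat_rows [[0, 0, 0, \<i>], [0, 0, 0, 0], [0, 0, 0, 0], [0, 0, 0, 0]],
     mat_rows [[cr m3, - cr m1, \<i> / 2 * cr m1 * cr m3, 0], [0, cr m3 - \<i> * cr m4, 0, 1], [0, 2 * \<i>, 2 * cr m3, 0], [0, 0, 0, 0]],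
     mat_rows [[cr m4, \<i> * cr m1, \<i> / 2 * cr m1 * cr m4, 0], [0, cr m4 + \<i> * cr m3, 0, \<i>], [0, 2, 2 * cr m4, 0], [0, 0, 0, 0]],
     mat_rows [[0, 0, 0, 0], [0, 0, 0, 0], [0, 0, 0, 1], [0, 0, 0, 0]]]"

definition familyC :: "real \<Rightarrow> real \<Rightarrow> real \<Rightarrow> real \<Rightarrow> real \<Rightarrow> cmat list" where
  "familyC m1 m2 m3 m4 t7 =
    [mat_rows [[3 * cr t7 - 2 * cr m1, 0, \<i> / 2 * (2 * cr m1 - cr t7) * (cr m1 - cr t7), 1],
               [0, cr t7, 0, 0], [4 * \<i>, 0, 2 * cr m1, 0], [0, 0, 0, 0]],
     mat_rows [[cr m2, 0, \<i> / 2 * cr m2 * (cr m1 - cr t7), \<i>], [0, cr m2, 0, 0], [0, 0, 2 * cr m2, 0], [0, 0, 0, 0]],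
     mat_rows [[cr m3, cr t7 - cr m1, \<i> / 2 * cr m3 * (cr m1 - cr t7), 0], [0, cr m3, 0, 1], [0, 2 * \<i>, 2 * cr m3, 0], [0, 0, 0, 0]],
     mat_rows [[cr m4, \<i> * (cr m1 - cr t7), \<i> / 2 * cr m4 * (cr m1 - cr t7), 0], [0, cr m4, 0, \<i>], [0, 2, 2 * cr m4, 0], [0, 0, 0, 0]],
     mat_rows [[- 1 / 2 * cr m2 * (cr m1 - cr t7), 0, - \<i> / 4 * cr m2 * (cr m1 - cr t7) ^ 2, 0],
               [0, - 1 / 2 * cr m2 * (cr m1 - cr t7), 0, 0],
               [0, 0, - cr m2 * (cr m1 - cr t7), 1], [0, 0, 0, 0]]]"

end

theory Submission
  imports Defs
begin


lemma gronwall1: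
  fixes g g' :: "real \<Rightarrow> real" and K :: real
  assumes d: "\<And>t. 0 \<le> t \<Longrightarrow> t \<le> 1 \<Longrightarrow> (g has_real_derivative g' t) (at t)"
    and b: "\<And>t. 0 \<le> t \<Longrightarrow> t \<le> 1 \<Longrightarrow> \<bar>g' t\<bar> \<le> K * \<bar>g t\<bar>"
    and g0: "g 0 = 0"
  shows "g 1 = 0"
proof -
  define y where "y t = (g t)\<^sup>2 * exp (- 2 * K * t)" for t
  have "y 1 \<le> y 0"
  proof (rule DERIV_nonpos_imp_nonincreasing, simp)
    fix t :: real assume t: "0 \<le> t" "t \<le> 1"
    have D: "(y has_real_derivative (2 * g t * g' t * exp (- 2 * K * t) + (g t)\<^sup>2 * (exp (- 2 * K * t) * (- 2 * K)))) (at t)"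
      unfolding y_def
      by (rule derivative_eq_intros d t refl | simp)+
    have "g t * g' t \<le> K * (g t)\<^sup>2"
    proof -
      have "g t * g' t \<le> \<bar>g t\<bar> * \<bar>g' t\<bar>" by (metis abs_ge_self abs_mult)
      also have "\<dots> \<le> \<bar>g t\<bar> * (K * \<bar>g t\<bar>)" by (rule mult_left_mono[OF b[OF t]]) simp
      finally show ?thesis by (simp add: power2_eq_square abs_mult_self_eq algebra_simps)
    qed
    then have "2 * g t * g' t * exp (- 2 * K * t) + (g t)\<^sup>2 * (exp (- 2 * K * t) * (- 2 * K)) \<le> 0"
      by (simp add: algebra_simps)
    with D show "\<exists>y'. (y has_real_derivative y') (at t) \<and> y' \<le> 0" by blast
  qed
  then have "(g 1)\<^sup>2 * exp (- 2 * K) \<le> 0" by (simp add: y_def g0)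
  then have "(g 1)\<^sup>2 \<le> 0" by (simp add: mult_le_0_iff)
  then show ?thesis by simp
qed




lemma gronwall_ball:
  fixes \<phi> :: "'a::real_normed_vector \<Rightarrow> real"
  assumes d: "\<And>p. p \<in> ball 0 \<delta> \<Longrightarrow> (\<phi> has_derivative L p) (at p)"
    and b: "\<And>p h. p \<in> ball 0 \<delta> \<Longrightarrow> \<bar>L p h\<bar> \<le> K * \<bar>\<phi> p\<bar> * norm h"
    and z: "\<phi> 0 = 0" and p: "p \<in> ball 0 \<delta>"
  shows "\<phi> p = 0"
proof -
  have inb: "t *\<^sub>R p \<in> ball 0 \<delta>" if "0 \<le> t" "t \<le> 1" for t
  proof -
    have "norm (t *\<^sub>R p) \<le> norm p" using that by (simp add: mult_left_le_one_le)
    then show ?thesis using p by simp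
  qed
  have "(\<lambda>t. \<phi> (t *\<^sub>R p)) 1 = 0"
  proof (rule gronwall1[where g' = "\<lambda>t. L (t *\<^sub>R p) p" and K = "K * norm p"])
    fix t :: real assume t: "0 \<le> t" "t \<le> 1"
    have bl: "bounded_linear (L (t *\<^sub>R p))" using d[OF inb[OF t]] by (rule has_derivative_bounded_linear)
    have "((\<lambda>t. \<phi> (t *\<^sub>R p)) has_derivative (\<lambda>h. L (t *\<^sub>R p) (h *\<^sub>R p))) (at t)"
    proof -
      have "((\<lambda>t. t *\<^sub>R p) has_derivative (\<lambda>h. h *\<^sub>R p)) (at t)"
        by (rule derivative_eq_intros refl | simp)+
      from has_derivative_compose[OF this d[OF inb[OF t]]] show ?thesis .
    qed
    moreover have "(\<lambda>h. L (t *\<^sub>R p) (h *\<^sub>R p)) = (\<lambda>h. L (t *\<^sub>R p) p * h)"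
      using bl by (simp add: fun_eq_iff linear_simps(5)[OF bl])
    ultimately show "((\<lambda>t. \<phi> (t *\<^sub>R p)) has_real_derivative L (t *\<^sub>R p) p) (at t)"
      by (simp add: has_field_derivative_def mult.commute[of _ "L (t *\<^sub>R p) p"] fun_eq_iff)
    show "\<bar>L (t *\<^sub>R p) p\<bar> \<le> K * norm p * \<bar>\<phi> (t *\<^sub>R p)\<bar>"
      using b[OF inb[OF t], of p] by (simp add: algebra_simps)
  qed (simp add: z)
  then show ?thesis by simp
qed




lemma dir1:
  fixes f :: "cpt \<Rightarrow> real"
  assumes T: "\<And>p t. f (p + (0,0,\<i> * of_real t)) = f p + t"
    and d: "(f has_derivative D) (at p)"
  shows "D (0,0,\<i>) = 1"
proof -
  have l: "((\<lambda>t::real. p + (0,0,\<i> * of_real t)) has_derivative (\<lambda>t. (0,0,\<i> * of_real t))) (at 0)"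
    by (rule derivative_eq_intros refl | simp)+
  have "p + (0,0,\<i> * of_real 0) = p" by (simp add: zero_prod_def)
  then have d': "(f has_derivative D) (at (p + (0,0,\<i> * of_real 0)))" using d by simp
  have 1: "((\<lambda>t. f (p + (0,0,\<i> * of_real t))) has_derivative (\<lambda>t. D (0,0,\<i> * of_real t))) (at 0)"
    using has_derivative_compose[OF l d'] .
  have 2: "((\<lambda>t. f (p + (0,0,\<i> * of_real t))) has_derivative (\<lambda>t. t)) (at (0::real))"
    unfolding T by (rule derivative_eq_intros refl | simp)+
  have "(\<lambda>t. D (0,0,\<i> * of_real t)) = (\<lambda>t. t)" using has_derivative_unique[OF 1 2] .
  then have "D (0,0,\<i> * of_real 1) = 1" by metis
  then show ?thesis by simp
qed

lemma lin_bound: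
  fixes l :: "cpt \<Rightarrow> real"
  assumes "linear l"
  shows "\<bar>l h\<bar> \<le> norm h * (\<bar>l (1,0,0)\<bar> + \<bar>l (\<i>,0,0)\<bar> + \<bar>l (0,1,0)\<bar> + \<bar>l (0,\<i>,0)\<bar> + \<bar>l (0,0,1)\<bar> + \<bar>l (0,0,\<i>)\<bar>)"
proof -
  obtain a b c where h: "h = (a,b,c)" by (metis prod.exhaust)
  have dec: "h = Re a *\<^sub>R (1,0,0) + Im a *\<^sub>R (\<i>,0,0) + Re b *\<^sub>R (0,1,0) + Im b *\<^sub>R (0,\<i>,0)
      + Re c *\<^sub>R (0,0,1) + Im c *\<^sub>R (0,0,\<i>)"
    by (simp add: h complex_eq_iff)
  have lh: "l h = Re a * l (1,0,0) + Im a * l (\<i>,0,0) + Re b * l (0,1,0) + Im b * l (0,\<i>,0)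
      + Re c * l (0,0,1) + Im c * l (0,0,\<i>)"
    apply (subst arg_cong[OF dec, of l])
    apply (simp only: linear_add[OF assms] linear_scale[OF assms] real_scaleR_def)
    done
  have na: "norm a \<le> norm h" and nb: "norm b \<le> norm h" and nc: "norm c \<le> norm h"
    using norm_fst_le[of a "(b,c)"] norm_snd_le[of "(b,c)" a] norm_fst_le[of b c] norm_snd_le[of c b] by (auto simp: h)
  have c1: "\<bar>Re x\<bar> \<le> norm h" "\<bar>Im x\<bar> \<le> norm h" if "norm x \<le> norm h" for x
    using that abs_Re_le_cmod[of x] abs_Im_le_cmod[of x] by auto
  have t: "\<bar>x * y\<bar> \<le> norm h * \<bar>y\<bar>" if "\<bar>x\<bar> \<le> norm h" for x y :: real
    using that by (simp add: abs_mult mult_right_mono)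
  show ?thesis unfolding lh
    using t[OF c1(1)[OF na], of "l (1,0,0)"] t[OF c1(2)[OF na], of "l (\<i>,0,0)"]
      t[OF c1(1)[OF nb], of "l (0,1,0)"] t[OF c1(2)[OF nb], of "l (0,\<i>,0)"]
      t[OF c1(1)[OF nc], of "l (0,0,1)"] t[OF c1(2)[OF nc], of "l (0,0,\<i>)"]
    by (simp only: distrib_left) (smt (verit))
qed




lemma sum6_aux:
  fixes B a0 a1 a2 a3 a4 a5 c0 c1 c2 c3 c4 L :: real
  shows "B = a0+a1+a2+a3+a4+a5 \<Longrightarrow> a5 = 0 \<Longrightarrow> a0 \<le> c0 + B/12 \<Longrightarrow> a1 \<le> c1 + B/12 \<Longrightarrow>
    a2 \<le> c2 + B/12 \<Longrightarrow> a3 \<le> c3 + B/12 \<Longrightarrow> a4 \<le> c4 + B/12 \<Longrightarrow> L = c0+c1+c2+c3+c4 \<Longrightarrow>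
    B \<le> L + 5 * (B/12)"
  by linarith

lemma zero3: "((0::complex), (0::complex), (0::complex)) = 0" by (simp add: zero_prod_def)

lemma core:
  fixes f \<Psi> :: "cpt \<Rightarrow> real" and \<Psi>D :: "cpt \<Rightarrow> cpt \<Rightarrow> real" and X :: "nat \<Rightarrow> cpt \<Rightarrow> cpt"
    and lam :: "nat \<Rightarrow> real" and U :: "cpt set"
  assumes T: "\<And>p t. f (p + (0,0,\<i> * of_real t)) = f p + t"
    and f0: "f 0 = 0" and oU: "open U" and U0: "0 \<in> U"
    and tang: "\<And>p k. p \<in> U \<Longrightarrow> f p = 0 \<Longrightarrow> k < 5 \<Longrightarrow> \<exists>D. (f has_derivative D) (at p) \<and> D (X k p) = 0"
    and PsiD: "\<And>p. (\<Psi> has_derivative \<Psi>D p) (at p)"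
    and inv: "\<And>p k. k < 5 \<Longrightarrow> \<Psi>D p (X k p) = lam k * \<Psi> p"
    and Xc: "\<And>k. k < 5 \<Longrightarrow> isCont (X k) 0"
    and X0: "X 0 0 = (1,0,0)" "X 1 0 = (\<i>,0,0)" "X 2 0 = (0,1,0)" "X 3 0 = (0,\<i>,0)" "X 4 0 = (0,0,1)"
    and r0: "r0 > 0"
    and uniq: "\<And>p t. norm p < r0 \<Longrightarrow> norm (p + (0,0,\<i> * of_real t)) < r0 \<Longrightarrow> \<Psi> p = 0
                 \<Longrightarrow> \<Psi> (p + (0,0,\<i> * of_real t)) = 0 \<Longrightarrow> t = 0"
    and Psi0: "\<Psi> 0 = 0"
  shows "\<exists>\<delta>>0. {p\<in>U. f p = 0} \<inter> ball 0 \<delta> = {p. \<Psi> p = 0} \<inter> ball 0 \<delta>"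
proof -
  define S where "S p = p + (0,0,\<i> * of_real (- f p))" for p
  have fS: "f (S p) = 0" for p by (simp only: S_def T)
  have S0: "S 0 = 0" unfolding S_def f0 by (simp add: zero_prod_def)
  obtain D0 where "(f has_derivative D0) (at 0)" using tang[OF U0 f0, of 0] by auto
  then have cf: "isCont f 0" by (rule has_derivative_continuous)
  have cS: "isCont S 0" unfolding S_def by (intro continuous_intros cf)
  obtain r1 where r1: "r1 > 0" "ball 0 r1 \<subseteq> U" using oU U0 open_contains_ball by blast
  have "eventually (\<lambda>q. \<forall>k\<in>{..<5::nat}. dist (X k q) (X k 0) < 1/12) (at 0)"
  proof (rule eventually_ball_finite)
    show "\<forall>k\<in>{..<5::nat}. eventually (\<lambda>q. dist (X k q) (X k 0) < 1/12) (at 0)"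
    proof
      fix k :: nat assume "k \<in> {..<5}"
      then have "(X k \<longlongrightarrow> X k 0) (at 0)" using Xc isCont_def by auto
      then show "eventually (\<lambda>q. dist (X k q) (X k 0) < 1/12) (at 0)" by (rule tendstoD) simp
    qed
  qed simp
  then obtain r2 where r2: "r2 > 0" "\<And>q k. q \<noteq> 0 \<Longrightarrow> dist q 0 < r2 \<Longrightarrow> k < 5 \<Longrightarrow> dist (X k q) (X k 0) < 1/12"
    unfolding eventually_at by auto
  define r where "r = min r0 (min r1 r2)"
  have r: "r > 0" using r0 r1 r2 by (simp add: r_def)
  have rU: "q \<in> U" if "norm q < r" for q
  proof -
    have "q \<in> ball 0 r1" using that by (simp add: r_def)
    then show ?thesis using r1(2) by blast
  qed
  have rX: "norm (X k q - X k 0) \<le> 1/12" if "norm q < r" "k < 5" for q k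
  proof (cases "q = 0")
    case True then show ?thesis by simp
  next
    case False then show ?thesis using r2(2)[OF False, of k] that by (simp add: r_def dist_norm)
  qed
  obtain \<delta>1 where d1: "\<delta>1 > 0" "\<And>p. dist p 0 < \<delta>1 \<Longrightarrow> dist (S p) (S 0) < r"
    using cS r unfolding continuous_at_eps_delta by blast
  define \<delta> where "\<delta> = min \<delta>1 r"
  have dpos: "\<delta> > 0" using d1 r by (simp add: \<delta>_def)
  have Sr: "norm (S p) < r" if "p \<in> ball 0 \<delta>" for p using d1(2)[of p] that S0 by (simp add: \<delta>_def dist_norm)
  have pr: "norm p < r" if "p \<in> ball 0 \<delta>" for p :: cpt using that by (simp add: \<delta>_def)
  have ex: "\<exists>D. (f has_derivative D) (at p) \<and> (\<forall>k<5. D (X k (S p)) = 0) \<and> D (0,0,\<i>) = 1"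
    if p: "p \<in> ball 0 \<delta>" for p
  proof -
    have SU: "S p \<in> U" using rU Sr p by blast
    have "\<forall>k. \<exists>D. k < 5 \<longrightarrow> (f has_derivative D) (at (S p)) \<and> D (X k (S p)) = 0"
    proof
      fix k show "\<exists>D. k < 5 \<longrightarrow> (f has_derivative D) (at (S p)) \<and> D (X k (S p)) = 0"
      proof (cases "k < 5")
        case True then show ?thesis using tang[OF SU fS True] by blast
      qed simp
    qed
    then obtain DD where DD0: "\<forall>k. k < 5 \<longrightarrow> (f has_derivative DD k) (at (S p)) \<and> DD k (X k (S p)) = 0"
      using choice[of "\<lambda>k D. k < 5 \<longrightarrow> (f has_derivative D) (at (S p)) \<and> D (X k (S p)) = 0"] by blast
    then have DD: "\<And>k. k < 5 \<Longrightarrow> (f has_derivative DD k) (at (S p)) \<and> DD k (X k (S p)) = 0"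
      by blast
    have eq: "DD k = DD 0" if "k < 5" for k
      using has_derivative_unique[OF conjunct1[OF DD[OF that]] conjunct1[OF DD[of 0]]] by simp
    define c where "c = f p"
    have fe: "f = (\<lambda>p'. f (p' + (0,0,\<i> * of_real (- c))) + c)" unfolding T by simp
    have l: "((\<lambda>p'. p' + (0,0,\<i> * of_real (- c))) has_derivative (\<lambda>h. h)) (at p)"
      by (rule derivative_eq_intros refl | simp)+
    have Sp: "S p = p + (0,0,\<i> * of_real (- c))" by (simp add: S_def c_def)
    have "((\<lambda>p'. f (p' + (0,0,\<i> * of_real (- c))) + c) has_derivative DD 0) (at p)"
    proof -
      have fS': "(f has_derivative DD 0) (at (p + (0,0,\<i> * of_real (- c))))" using DD[of 0] Sp by simp
      have "((\<lambda>p'. f (p' + (0,0,\<i> * of_real (- c)))) has_derivative (\<lambda>h. DD 0 h)) (at p)"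
        using has_derivative_compose[OF l fS'] .
      then show ?thesis using has_derivative_add_const by fastforce
    qed
    then have fd: "(f has_derivative DD 0) (at p)" using fe by simp
    have "DD 0 (0,0,\<i>) = 1" using dir1[OF T conjunct1[OF DD[of 0]]] by simp
    moreover have "\<forall>k<5. DD 0 (X k (S p)) = 0"
    proof (intro allI impI)
      fix k :: nat assume k: "k < 5"
      show "DD 0 (X k (S p)) = 0" using conjunct2[OF DD[OF k]] eq[OF k] by simp
    qed
    ultimately show ?thesis using fd by blast
  qed
  obtain DF where DF: "\<And>p. p \<in> ball 0 \<delta> \<Longrightarrow> (f has_derivative DF p) (at p) \<and> (\<forall>k<5. DF p (X k (S p)) = 0) \<and> DF p (0,0,\<i>) = 1"
  proof -
    have "\<forall>p. \<exists>D. p \<in> ball 0 \<delta> \<longrightarrow> (f has_derivative D) (at p) \<and> (\<forall>k<5. D (X k (S p)) = 0) \<and> D (0,0,\<i>) = 1"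
    proof
      fix p show "\<exists>D. p \<in> ball 0 \<delta> \<longrightarrow> (f has_derivative D) (at p) \<and> (\<forall>k<5. D (X k (S p)) = 0) \<and> D (0,0,\<i>) = 1"
      proof (cases "p \<in> ball 0 \<delta>")
        case True then show ?thesis using ex[OF True] by blast
      qed simp
    qed
    then obtain DF' where "\<forall>p. p \<in> ball 0 \<delta> \<longrightarrow> (f has_derivative DF' p) (at p) \<and> (\<forall>k<5. DF' p (X k (S p)) = 0) \<and> DF' p (0,0,\<i>) = 1"
      using choice[of "\<lambda>p D. p \<in> ball 0 \<delta> \<longrightarrow> (f has_derivative D) (at p) \<and> (\<forall>k<5. D (X k (S p)) = 0) \<and> D (0,0,\<i>) = 1"] by blast
    then show ?thesis using that by blast
  qed
  define L where "L p h = \<Psi>D (S p) (h + (0,0,\<i> * of_real (- DF p h)))" for p h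
  define \<phi> where "\<phi> p = \<Psi> (S p)" for p
  have phid: "(\<phi> has_derivative L p) (at p)" if p: "p \<in> ball 0 \<delta>" for p
  proof -
    have Sd: "(S has_derivative (\<lambda>h. h + (0,0,\<i> * of_real (- DF p h)))) (at p)"
      unfolding S_def using DF[OF p] by (auto intro!: derivative_eq_intros)
    show ?thesis unfolding \<phi>_def L_def using has_derivative_compose[OF Sd PsiD] .
  qed
  define \<Lambda> where "\<Lambda> = (\<Sum>k<5. \<bar>lam k\<bar>)"
  have bnd: "\<bar>L p h\<bar> \<le> (2 * \<Lambda>) * \<bar>\<phi> p\<bar> * norm h" if p: "p \<in> ball 0 \<delta>" for p h
  proof -
    have bl: "bounded_linear (L p)" using phid[OF p] by (rule has_derivative_bounded_linear)
    then have lin: "linear (L p)" by (rule bounded_linear.linear)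
    have blP: "linear (\<Psi>D (S p))" using PsiD[of "S p"] has_derivative_bounded_linear bounded_linear.linear by blast
    define B where "B = \<bar>L p (1,0,0)\<bar> + \<bar>L p (\<i>,0,0)\<bar> + \<bar>L p (0,1,0)\<bar> + \<bar>L p (0,\<i>,0)\<bar> + \<bar>L p (0,0,1)\<bar> + \<bar>L p (0,0,\<i>)\<bar>"
    have lb: "\<bar>L p v\<bar> \<le> norm v * B" for v unfolding B_def by (rule lin_bound[OF lin])
    have B0: "B \<ge> 0" unfolding B_def by simp
    have LX: "L p (X k (S p)) = lam k * \<phi> p" if k: "k < 5" for k
    proof -
      have "DF p (X k (S p)) = 0" using DF[OF p] k by blast
      then have "L p (X k (S p)) = \<Psi>D (S p) (X k (S p))" by (simp add: L_def zero3)
      then show ?thesis using inv[OF k] by (simp add: \<phi>_def)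
    qed
    have L6: "L p (0,0,\<i>) = 0"
    proof -
      have "DF p (0,0,\<i>) = 1" using DF[OF p] by blast
      then have "L p (0,0,\<i>) = \<Psi>D (S p) 0" by (simp add: L_def zero3)
      then show ?thesis using linear_0[OF blP] by simp
    qed
    have ek: "\<bar>L p (X k 0)\<bar> \<le> \<bar>lam k\<bar> * \<bar>\<phi> p\<bar> + B / 12" if k: "k < 5" for k
    proof -
      have "L p (X k 0) = L p (X k (S p)) + L p (X k 0 - X k (S p))"
        using linear_add[OF lin, of "X k (S p)" "X k 0 - X k (S p)"] by simp
      then have "\<bar>L p (X k 0)\<bar> \<le> \<bar>L p (X k (S p))\<bar> + \<bar>L p (X k 0 - X k (S p))\<bar>" by linarith
      also have "\<dots> \<le> \<bar>lam k\<bar> * \<bar>\<phi> p\<bar> + norm (X k 0 - X k (S p)) * B"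
        using LX[OF k] lb[of "X k 0 - X k (S p)"] by (simp add: abs_mult)
      also have "norm (X k 0 - X k (S p)) * B \<le> (1/12) * B"
        using mult_right_mono[OF rX[OF Sr[OF p] k] B0] by (simp add: norm_minus_commute)
      finally show ?thesis by simp
    qed
    have "B \<le> \<Lambda> * \<bar>\<phi> p\<bar> + 5 * (B / 12)"
    proof -
      have Ls: "\<Lambda> * \<bar>\<phi> p\<bar> = \<bar>lam 0\<bar> * \<bar>\<phi> p\<bar> + \<bar>lam 1\<bar> * \<bar>\<phi> p\<bar> + \<bar>lam 2\<bar> * \<bar>\<phi> p\<bar> + \<bar>lam 3\<bar> * \<bar>\<phi> p\<bar> + \<bar>lam 4\<bar> * \<bar>\<phi> p\<bar>"
        by (simp add: \<Lambda>_def numeral_eq_Suc algebra_simps)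
      have e0: "\<bar>L p (1,0,0)\<bar> \<le> \<bar>lam 0\<bar> * \<bar>\<phi> p\<bar> + B / 12" using ek[of 0] X0 by simp
      have e1: "\<bar>L p (\<i>,0,0)\<bar> \<le> \<bar>lam 1\<bar> * \<bar>\<phi> p\<bar> + B / 12" using ek[of 1] X0 by simp
      have e2: "\<bar>L p (0,1,0)\<bar> \<le> \<bar>lam 2\<bar> * \<bar>\<phi> p\<bar> + B / 12" using ek[of 2] X0 by simp
      have e3: "\<bar>L p (0,\<i>,0)\<bar> \<le> \<bar>lam 3\<bar> * \<bar>\<phi> p\<bar> + B / 12" using ek[of 3] X0 by simp
      have e4: "\<bar>L p (0,0,1)\<bar> \<le> \<bar>lam 4\<bar> * \<bar>\<phi> p\<bar> + B / 12" using ek[of 4] X0 by simp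
      have "\<bar>L p (0,0,\<i>)\<bar> = 0" using L6 by simp
      from sum6_aux[OF B_def this e0 e1 e2 e3 e4 Ls] show ?thesis .
    qed
    then have "B \<le> 2 * \<Lambda> * \<bar>\<phi> p\<bar>"
    proof -
      have "\<Lambda> \<ge> 0" unfolding \<Lambda>_def by (rule sum_nonneg) simp
      then have "\<Lambda> * \<bar>\<phi> p\<bar> \<ge> 0" by simp
      then show ?thesis using \<open>B \<le> \<Lambda> * \<bar>\<phi> p\<bar> + 5 * (B / 12)\<close> by linarith
    qed
    then have "norm h * B \<le> norm h * (2 * \<Lambda> * \<bar>\<phi> p\<bar>)" by (simp add: mult_left_mono)
    with lb[of h] show ?thesis by (simp add: algebra_simps)
  qed
  have phi0: "\<phi> p = 0" if "p \<in> ball 0 \<delta>" for p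
    using gronwall_ball[OF phid bnd _ that] by (simp add: \<phi>_def S0 Psi0)
  show ?thesis
  proof (intro exI[of _ \<delta>] conjI dpos set_eqI iffI)
    fix p assume "p \<in> {p \<in> U. f p = 0} \<inter> ball 0 \<delta>"
    then have "p \<in> ball 0 \<delta>" "f p = 0" by auto
    moreover then have "S p = p" by (simp add: S_def zero_prod_def)
    ultimately show "p \<in> {p. \<Psi> p = 0} \<inter> ball 0 \<delta>" using phi0 by (metis (mono_tags) IntI \<phi>_def mem_Collect_eq)
  next
    fix p assume "p \<in> {p. \<Psi> p = 0} \<inter> ball 0 \<delta>"
    then have p: "p \<in> ball 0 \<delta>" "\<Psi> p = 0" by auto
    have "f p = 0"
    proof -
      have e: "S p + (0,0,\<i> * of_real (f p)) = p" by (simp add: S_def zero_prod_def)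
      have n1: "norm (S p) < r0" using Sr[OF p(1)] by (simp add: r_def)
      have n2: "norm (S p + (0,0,\<i> * of_real (f p))) < r0" using pr[OF p(1)] e by (simp add: r_def)
      have "\<Psi> (S p) = 0" using phi0[OF p(1)] by (simp add: \<phi>_def)
      from uniq[OF n1 n2 this] show ?thesis using e p(2) by simp
    qed
    moreover then have "S p = p" by (simp add: S_def zero_prod_def)
    ultimately show "p \<in> {p \<in> U. f p = 0} \<inter> ball 0 \<delta>" using p rU Sr by (metis (mono_tags) IntI mem_Collect_eq)
  qed
qed




definition Psi :: "real \<Rightarrow> cpt \<Rightarrow> real" where
  "Psi d p = (case p of (z1,z2,w) \<Rightarrow> Im w - 2 * (Re z1 + d/2 * Im w)^2 - (Re z2)^2 - (Im z2)^2)"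
definition PsiD :: "real \<Rightarrow> cpt \<Rightarrow> cpt \<Rightarrow> real" where
  "PsiD d p h = (case p of (z1,z2,w) \<Rightarrow> case h of (h1,h2,h3) \<Rightarrow>
     Im h3 - 4 * (Re z1 + d/2 * Im w) * (Re h1 + d/2 * Im h3) - 2 * Re z2 * Re h2 - 2 * Im z2 * Im h2)"

lemma vf_simp: "vfield E (z1,z2,w) =
     (E 0 0 * z1 + E 0 1 * z2 + E 0 2 * w + E 0 3,
      E 1 0 * z1 + E 1 1 * z2 + E 1 2 * w + E 1 3,
      E 2 0 * z1 + E 2 1 * z2 + E 2 2 * w + E 2 3)" by (simp add: vfield_def)

lemma famA_0: "PsiD 0 p (vfield (familyA m1 m2 t16 ! 0) p) = (2*m1) * Psi 0 p"
  by (cases p) (simp add: vf_simp PsiD_def Psi_def familyA_def mat_rows_def algebra_simps power2_eq_square)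

lemma famA_1: "PsiD 0 p (vfield (familyA m1 m2 t16 ! 1) p) = (2*m2) * Psi 0 p"
  by (cases p) (simp add: vf_simp PsiD_def Psi_def familyA_def mat_rows_def algebra_simps power2_eq_square)

lemma famA_2: "PsiD 0 p (vfield (familyA m1 m2 t16 ! 2) p) = (0) * Psi 0 p"
  by (cases p) (simp add: vf_simp PsiD_def Psi_def familyA_def mat_rows_def algebra_simps power2_eq_square)

lemma famA_3: "PsiD 0 p (vfield (familyA m1 m2 t16 ! 3) p) = (0) * Psi 0 p"
  by (cases p) (simp add: vf_simp PsiD_def Psi_def familyA_def mat_rows_def algebra_simps power2_eq_square)

lemma famA_4: "PsiD 0 p (vfield (familyA m1 m2 t16 ! 4) p) = (0) * Psi 0 p"
  by (cases p) (simp add: vf_simp PsiD_def Psi_def familyA_def mat_rows_def algebra_simps power2_eq_square)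

lemma famB_0: "PsiD m1 p (vfield (familyB m1 m3 m4 ! 0) p) = (0) * Psi m1 p"
  by (cases p) (simp add: vf_simp PsiD_def Psi_def familyB_def mat_rows_def algebra_simps power2_eq_square)

lemma famB_1: "PsiD m1 p (vfield (familyB m1 m3 m4 ! 1) p) = (0) * Psi m1 p"
  by (cases p) (simp add: vf_simp PsiD_def Psi_def familyB_def mat_rows_def algebra_simps power2_eq_square)

lemma famB_2: "PsiD m1 p (vfield (familyB m1 m3 m4 ! 2) p) = (2*m3) * Psi m1 p"
  by (cases p) (simp add: vf_simp PsiD_def Psi_def familyB_def mat_rows_def algebra_simps power2_eq_square)

lemma famB_3: "PsiD m1 p (vfield (familyB m1 m3 m4 ! 3) p) = (2*m4) * Psi m1 p"
  by (cases p) (simp add: vf_simp PsiD_def Psi_def familyB_def mat_rows_def algebra_simps power2_eq_square)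

lemma famB_4: "PsiD m1 p (vfield (familyB m1 m3 m4 ! 4) p) = (0) * Psi m1 p"
  by (cases p) (simp add: vf_simp PsiD_def Psi_def familyB_def mat_rows_def algebra_simps power2_eq_square)

lemma famC_0: "PsiD (m1-t7) p (vfield (familyC m1 m2 m3 m4 t7 ! 0) p) = (2*t7) * Psi (m1-t7) p"
  by (cases p) (simp add: vf_simp PsiD_def Psi_def familyC_def mat_rows_def algebra_simps power2_eq_square; simp add: field_simps)

lemma famC_1: "PsiD (m1-t7) p (vfield (familyC m1 m2 m3 m4 t7 ! 1) p) = (2*m2) * Psi (m1-t7) p"
  by (cases p) (simp add: vf_simp PsiD_def Psi_def familyC_def mat_rows_def algebra_simps power2_eq_square; simp add: field_simps)

lemma famC_2: "PsiD (m1-t7) p (vfield (familyC m1 m2 m3 m4 t7 ! 2) p) = (2*m3) * Psi (m1-t7) p"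
  by (cases p) (simp add: vf_simp PsiD_def Psi_def familyC_def mat_rows_def algebra_simps power2_eq_square; simp add: field_simps)

lemma famC_3: "PsiD (m1-t7) p (vfield (familyC m1 m2 m3 m4 t7 ! 3) p) = (2*m4) * Psi (m1-t7) p"
  by (cases p) (simp add: vf_simp PsiD_def Psi_def familyC_def mat_rows_def algebra_simps power2_eq_square; simp add: field_simps)

lemma famC_4: "PsiD (m1-t7) p (vfield (familyC m1 m2 m3 m4 t7 ! 4) p) = (- (m2*(m1-t7))) * Psi (m1-t7) p"
  by (cases p) (simp add: vf_simp PsiD_def Psi_def familyC_def mat_rows_def algebra_simps power2_eq_square; simp add: field_simps)





lemma Psi_deriv: "(Psi d has_derivative PsiD d p) (at p)"
proof -
  have e: "Psi d = (\<lambda>p. Im (snd (snd p)) - 2 * (Re (fst p) + d/2 * Im (snd (snd p)))^2 - (Re (fst (snd p)))^2 - (Im (fst (snd p)))^2)"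
    by (auto simp: Psi_def fun_eq_iff split: prod.splits)
  have e2: "PsiD d p = (\<lambda>h. Im (snd (snd h)) - 2 * (2 * (Re (fst p) + d/2 * Im (snd (snd p))) * (Re (fst h) + d/2 * Im (snd (snd h))))
     - 2 * Re (fst (snd p)) * Re (fst (snd h)) - 2 * Im (fst (snd p)) * Im (fst (snd h)))"
    by (auto simp: PsiD_def fun_eq_iff split: prod.splits)
  show ?thesis unfolding e e2
    by (rule derivative_eq_intros refl bounded_linear.has_derivative[OF bounded_linear_Re]
         bounded_linear.has_derivative[OF bounded_linear_Im] | simp)+
       (simp add: algebra_simps power2_eq_square)
qed

lemma vfield_cont: "isCont (vfield E) x"
proof -
  have e: "vfield E = (\<lambda>p. (E 0 0 * fst p + E 0 1 * fst (snd p) + E 0 2 * snd (snd p) + E 0 3,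
      E 1 0 * fst p + E 1 1 * fst (snd p) + E 1 2 * snd (snd p) + E 1 3,
      E 2 0 * fst p + E 2 1 * fst (snd p) + E 2 2 * snd (snd p) + E 2 3))"
    by (auto simp: vfield_def fun_eq_iff split: prod.splits)
  show ?thesis unfolding e by (intro continuous_intros)
qed

lemma in_span: assumes "k < length Es" shows "Es ! k \<in> real_span Es"
proof -
  have "(\<lambda>i j. \<Sum>m<length Es. complex_of_real (if m = k then 1 else 0) * (Es ! m) i j) = Es ! k"
  proof (intro ext)
    fix i j
    have "(\<Sum>m<length Es. complex_of_real (if m = k then 1 else 0) * (Es ! m) i j)
        = (\<Sum>m<length Es. if m = k then (Es ! m) i j else 0)" by (rule sum.cong) auto
    also have "\<dots> = (Es ! k) i j" using assms by simp
    finally show "(\<Sum>m<length Es. complex_of_real (if m = k then 1 else 0) * (Es ! m) i j) = (Es ! k) i j" .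
  qed
  then have "\<exists>c. Es ! k = (\<lambda>i j. \<Sum>m<length Es. complex_of_real (c m) * (Es ! m) i j)"
    by (intro exI[of _ "\<lambda>m. if m = k then 1 else 0"]) simp
  then show ?thesis unfolding real_span_def by simp
qed

lemma Psi_uniq:
  fixes d :: real
  defines "r0 \<equiv> 1 / (4 * (1 + \<bar>d\<bar> + d^2))"
  assumes n1: "norm p < r0" and n2: "norm (p + (0,0,\<i> * of_real t)) < r0"
    and z1: "Psi d p = 0" and z2: "Psi d (p + (0,0,\<i> * of_real t)) = 0"
  shows "t = 0"
proof -
  obtain a b c where p: "p = (a,b,c)" by (metis prod.exhaust)
  define x where "x = Re a"
  define v where "v = Im c"
  define v' where "v' = Im c + t"
  have nrm: "\<bar>Re a\<bar> \<le> norm q" "\<bar>Im c\<bar> \<le> norm q" if "q = (a,b,c)" for q a b c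
  proof -
    have "norm a \<le> norm q" "norm c \<le> norm q"
      using that norm_fst_le[of a "(b,c)"] norm_snd_le[of "(b,c)" a] norm_snd_le[of c b] by auto
    then show "\<bar>Re a\<bar> \<le> norm q" "\<bar>Im c\<bar> \<le> norm q"
      using abs_Re_le_cmod[of a] abs_Im_le_cmod[of c] by auto
  qed
  have bx: "\<bar>x\<bar> < r0" using nrm(1)[of p a b c] n1 p x_def by simp
  have bv: "\<bar>v\<bar> < r0" using nrm(2)[of p a b c] n1 p v_def by simp
  have bv': "\<bar>v'\<bar> < r0" using nrm(2)[of "p + (0,0,\<i> * of_real t)" a b "c + \<i> * of_real t"] n2 p v'_def by simp
  have P1: "v - 2 * (x + d/2 * v)^2 - (Re b)^2 - (Im b)^2 = 0" using z1 by (simp add: p Psi_def x_def v_def)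
  have P2: "v' - 2 * (x + d/2 * v')^2 - (Re b)^2 - (Im b)^2 = 0" using z2 by (simp add: p Psi_def x_def v'_def)
  have fac: "(v' - v) * (1 - d * (2 * x + d * (v + v') / 2)) = 0"
    using P1 P2 by (simp add: algebra_simps power2_eq_square) (simp add: field_simps)
  have r0p: "r0 > 0" unfolding r0_def by (simp add: add_pos_nonneg)
  have "\<bar>2 * x + d * (v + v') / 2\<bar> \<le> 2 * r0 + \<bar>d\<bar> * r0"
  proof -
    have "\<bar>d * (v + v') / 2\<bar> = \<bar>d\<bar> * (\<bar>v + v'\<bar> / 2)" by (simp add: abs_mult)
    also have "\<dots> \<le> \<bar>d\<bar> * r0" using bv bv' by (intro mult_left_mono) auto
    finally show ?thesis using bx by linarith
  qed
  then have "\<bar>d * (2 * x + d * (v + v') / 2)\<bar> \<le> \<bar>d\<bar> * (2 * r0 + \<bar>d\<bar> * r0)"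
    by (simp add: abs_mult mult_left_mono)
  also have "\<dots> = (2 * \<bar>d\<bar> + d^2) * r0" by (simp add: algebra_simps power2_eq_square)
  also have "\<dots> < 1"
  proof -
    have "(2 * \<bar>d\<bar> + d^2) < 4 * (1 + \<bar>d\<bar> + d^2)" by (smt (verit) zero_le_power2)
    then show ?thesis unfolding r0_def by (simp add: add_pos_nonneg divide_less_eq field_simps)
  qed
  finally have "1 - d * (2 * x + d * (v + v') / 2) \<noteq> 0" by linarith
  with fac have "v' = v" by simp
  then show ?thesis by (simp add: v_def v'_def)
qed




lemma defphi_shift: "defphi a (p + (0,0,\<i> * of_real t)) = defphi a p + t"
  by (cases p) (simp add: defphi_def)

lemma defphi_0: assumes w: "\<forall>\<alpha>. a \<alpha> \<noteq> 0 \<longrightarrow> weight \<alpha> \<ge> 3" shows "defphi a 0 = 0"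
proof -
  have "(\<lambda>\<alpha>. a \<alpha> * monom \<alpha> 0 0 0) = (\<lambda>\<alpha>. 0)"
  proof
    fix \<alpha> :: midx
    obtain k1 k2 l1 l2 m where al: "\<alpha> = (k1,k2,l1,l2,m)" by (metis prod.exhaust)
    show "a \<alpha> * monom \<alpha> 0 0 0 = 0"
    proof (cases "k1 + k2 + l1 + l2 + m = 0")
      case True
      then have "weight \<alpha> = 0" by (simp add: al weight_def)
      then have "a \<alpha> = 0" using w by (metis not_numeral_le_zero)
      then show ?thesis by simp
    next
      case False
      then show ?thesis by (auto simp: al monom_def)
    qed
  qed
  then have "hseries a 0 0 0 = 0" by (simp add: hseries_def)
  then show ?thesis by (simp add: defphi_def zero_prod_def)
qed

definition Ld :: "real \<Rightarrow> cmat" where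
  "Ld d = (\<lambda>i j. if i = j then 1 else if i = 0 \<and> j = 2 then - \<i> * of_real (d/2) else 0)"

lemma affLd: "affmap (Ld d) (0,0,0) p = (fst p - \<i> * of_real (d/2) * snd (snd p), fst (snd p), snd (snd p))"
  by (cases p) (simp add: affmap_def Ld_def)

lemma main_gen:
  fixes Es :: "cmat list" and d l0 l1 l2 l3 l4 :: real
  assumes len: "length Es = 5"
    and iv: "integral_variety (real_span Es) M"
    and i0: "\<And>p. PsiD d p (vfield (Es ! 0) p) = l0 * Psi d p"
    and i1: "\<And>p. PsiD d p (vfield (Es ! 1) p) = l1 * Psi d p"
    and i2: "\<And>p. PsiD d p (vfield (Es ! 2) p) = l2 * Psi d p"
    and i3: "\<And>p. PsiD d p (vfield (Es ! 3) p) = l3 * Psi d p"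
    and i4: "\<And>p. PsiD d p (vfield (Es ! 4) p) = l4 * Psi d p"
    and X0: "vfield (Es ! 0) 0 = (1,0,0)" "vfield (Es ! 1) 0 = (\<i>,0,0)" "vfield (Es ! 2) 0 = (0,1,0)"
            "vfield (Es ! 3) 0 = (0,\<i>,0)" "vfield (Es ! 4) 0 = (0,0,1)"
  shows "affinely_equivalent M quadric"
proof -
  obtain U a where oU: "open U" and U0: "0 \<in> U" and wa: "\<forall>\<alpha>. a \<alpha> \<noteq> 0 \<longrightarrow> weight \<alpha> \<ge> 3" and Mdef: "M = {p \<in> U. defphi a p = 0}"
    and tg: "\<forall>E \<in> real_span Es. \<forall>p \<in> M. \<exists>D. (defphi a has_derivative D) (at p) \<and> D (vfield E p) = 0"
    using iv unfolding integral_variety_def by blast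
  define lam where "lam = (\<lambda>k. [l0,l1,l2,l3,l4] ! k)"
  have k5: "k < 5 \<Longrightarrow> k = 0 \<or> k = 1 \<or> k = 2 \<or> k = 3 \<or> k = 4" for k :: nat by arith
  have inv: "PsiD d p (vfield (Es ! k) p) = lam k * Psi d p" if "k < 5" for p k
    using k5[OF that] by (elim disjE) (simp_all only: i0 i1 i2 i3 i4, simp_all add: lam_def)
  have tang: "\<exists>D. (defphi a has_derivative D) (at p) \<and> D (vfield (Es ! k) p) = 0"
    if "p \<in> U" "defphi a p = 0" "k < 5" for p k
  proof -
    have "Es ! k \<in> real_span Es" using in_span[of k Es] len that(3) by simp
    moreover have "p \<in> M" using that Mdef by simp
    ultimately show ?thesis using tg by blast
  qed
  define r0 where "r0 = 1 / (4 * (1 + \<bar>d\<bar> + d^2))"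
  have r0p: "r0 > 0" unfolding r0_def by (simp add: add_pos_nonneg)
  have Psi0: "Psi d 0 = 0" by (simp add: Psi_def zero_prod_def)
  obtain \<delta> where dpos: "\<delta> > 0" and eq: "{p\<in>U. defphi a p = 0} \<inter> ball 0 \<delta> = {p. Psi d p = 0} \<inter> ball 0 \<delta>"
    using core[of "defphi a" U "\<lambda>k. vfield (Es ! k)" "Psi d" "PsiD d" lam r0, OF defphi_shift defphi_0[OF wa] oU U0 tang
        Psi_deriv inv vfield_cont X0 r0p _ Psi0] Psi_uniq[of _ d] unfolding r0_def by blast
  define A where "A = affmap (Ld d) (0,0,0)"
  define A' where "A' = affmap (Ld (-d)) (0,0,0)"
  have AA': "A (A' p) = p" for p by (simp add: A_def A'_def affLd algebra_simps)
  have A'A: "A' (A p) = p" for p by (simp add: A_def A'_def affLd algebra_simps)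
  have bij: "bij A" by (rule o_bij[of A']) (auto simp: fun_eq_iff AA' A'A)
  have quad: "A p \<in> quadric \<longleftrightarrow> Psi d p = 0" for p
    by (cases p) (auto simp: A_def affLd quadric_def Psi_def cmod_power2 algebra_simps)
  have cA': "continuous (at x) A'" for x
  proof -
    have e: "A' = (\<lambda>p. (fst p - \<i> * of_real (- d/2) * snd (snd p), fst (snd p), snd (snd p)))"
      by (simp add: A'_def affLd fun_eq_iff)
    show ?thesis unfolding e by (intro continuous_intros)
  qed
  have oW': "open (A' -` ball 0 \<delta>)" by (rule continuous_open_vimage[OF open_ball cA'])
  have img: "A ` (M \<inter> ball 0 \<delta>) = quadric \<inter> (A' -` ball 0 \<delta>)"
  proof (intro set_eqI iffI)
    fix x assume "x \<in> A ` (M \<inter> ball 0 \<delta>)"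
    then obtain p where p: "p \<in> M \<inter> ball 0 \<delta>" "x = A p" by blast
    then have "Psi d p = 0" "p \<in> ball 0 \<delta>" using eq Mdef by blast+
    then show "x \<in> quadric \<inter> (A' -` ball 0 \<delta>)" using p(2) quad A'A by simp
  next
    fix x assume x: "x \<in> quadric \<inter> (A' -` ball 0 \<delta>)"
    then have "Psi d (A' x) = 0" "A' x \<in> ball 0 \<delta>" using quad[of "A' x"] AA' by auto
    then have "A' x \<in> M \<inter> ball 0 \<delta>" using eq Mdef by blast
    then show "x \<in> A ` (M \<inter> ball 0 \<delta>)" using AA'[of x] by (metis image_eqI)
  qed
  show ?thesis unfolding affinely_equivalent_def
    using bij dpos oW' img unfolding A_def by (intro exI[of _ "Ld d"] exI[of _ "(0,0,0)"] exI[of _ "ball 0 \<delta>"] exI[of _ "A' -` ball 0 \<delta>"]) auto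
qed




theorem theorem4p1:
  fixes m1 m2 m3 m4 t7 t16 :: real and Es :: "cmat list" and M :: "cpt set"
  assumes "(m2 \<noteq> 0 \<and> Es = familyA m1 m2 t16) \<or> Es = familyB m1 m3 m4
           \<or> Es = familyC m1 m2 m3 m4 t7"
    and "integral_variety (real_span Es) M"
  shows "affinely_equivalent M quadric"
  using assms(1)
proof (elim disjE conjE)
  assume E: "Es = familyA m1 m2 t16"
  show ?thesis unfolding E
    by (rule main_gen[OF _ assms(2)[unfolded E] famA_0 famA_1 famA_2 famA_3 famA_4])
       (simp_all add: familyA_def mat_rows_def vf_simp zero_prod_def)
next
  assume E: "Es = familyB m1 m3 m4"
  show ?thesis unfolding E
    by (rule main_gen[OF _ assms(2)[unfolded E] famB_0 famB_1 famB_2 famB_3 famB_4])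
       (simp_all add: familyB_def mat_rows_def vf_simp zero_prod_def)
next
  assume E: "Es = familyC m1 m2 m3 m4 t7"
  show ?thesis unfolding E
    by (rule main_gen[OF _ assms(2)[unfolded E] famC_0 famC_1 famC_2 famC_3 famC_4])
       (simp_all add: familyC_def mat_rows_def vf_simp zero_prod_def)
qed


end
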